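(* Let $(a_k)_{k\geqslant1}$ be a sequence of complex numbers and $S(x)=\sum_{k\leqslant x}a_k\left[\frac{x}{k}\right]\log k$. Suppose that for every $v>1$, $\lim_{k\to\infty}|S(k)|/k^{v}=0$. Then the series $\sum_{m=1}^\infty a_m m^{-v}$ converges for every $v>1$.
   Context: $[x]$ denotes the integer part of a real number $x$. *)

theory Defs
  imports "HOL-Analysis.Analysis"
begin

text \<open>S(x) = sum over 1 <= k <= x of a_k [x/k] log k, evaluated at natural numbers n.
  The sequence a is indexed from 1; the value a 0 is irrelevant.\<close>
definition S_fun :: "(nat \<Rightarrow> complex) \<Rightarrow> nat \<Rightarrow> complex" where
  "S_fun a n = (\<Sum>k=1..n. a k * of_int \<lfloor>real n / real k\<rfloor> * of_real (ln (real k)))"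

end

theory Submission
  imports Defs "HOL-Computational_Algebra.Squarefree"
begin

definition mu :: "nat \<Rightarrow> real" where
  "mu n = (if squarefree n then (-1) ^ card (prime_factors n) else 0)"

lemma mu_abs: "\<bar>mu n\<bar> \<le> 1"
  by (simp add: mu_def)

lemma pf_prod:
  fixes P :: "nat set"
  assumes "finite P" "\<And>p. p \<in> P \<Longrightarrow> prime p"
  shows "prime_factorization (\<Prod>P) = mset_set P"
proof -
  have "\<Prod>P = prod_mset (mset_set P)"
    by (simp add: prod_unfold_prod_mset)
  moreover have "prime_factorization (prod_mset (mset_set P)) = mset_set P"
    by (rule prime_factorization_prod_mset_primes) (use assms in auto)
  ultimately show ?thesis by simp
qed

lemma sqf_pf:
  fixes d :: nat
  assumes "squarefree d"
  shows "prime_factorization d = mset_set (prime_factors d)"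
proof (rule multiset_eqI)
  fix p
  have d0: "d \<noteq> 0" using assms by (metis not_squarefree_0)
  show "count (prime_factorization d) p = count (mset_set (prime_factors d)) p"
  proof (cases "p \<in> prime_factors d")
    case True
    then have "multiplicity p d = 1" using squarefree_factorial_semiring'[OF d0] assms by blast
    moreover have "prime p" using True by blast
    ultimately have "count (prime_factorization d) p = 1" by (simp add: count_prime_factorization_prime)
    moreover have "count (mset_set (prime_factors d)) p = 1" using True by (simp only: count_mset_set(1) finite_set_mset)
    ultimately show ?thesis by simp
  next
    case False
    then show ?thesis by (simp add: not_in_iff)
  qed
qed

lemma sqf_prod: "squarefree (d::nat) \<Longrightarrow> \<Prod>(prime_factors d) = d"
proof -
  assume sq: "squarefree d"
  then have d0: "d > 0" by (cases d) auto
  have "\<Prod>(prime_factors d) = prod_mset (mset_set (prime_factors d))"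
    by (simp add: prod_unfold_prod_mset)
  also have "\<dots> = prod_mset (prime_factorization d)" using sqf_pf[OF sq] by simp
  also have "\<dots> = d" using d0 by simp
  finally show ?thesis .
qed

lemma mu_sum:
  fixes n :: nat
  assumes n: "n > 0"
  shows "(\<Sum>d | d dvd n. mu d) = (if n = 1 then 1 else 0)"
proof -
  define F where "F = prime_factors n"
  have fin: "finite {d. d dvd n}" using n by simp
  have "(\<Sum>d | d dvd n. mu d) = (\<Sum>d \<in> {d. d dvd n \<and> squarefree d}. mu d)"
    by (rule sum.mono_neutral_right) (use fin in \<open>auto simp: mu_def\<close>)
  also have "\<dots> = (\<Sum>P \<in> Pow F. mu (\<Prod>P))"
  proof (rule sum.reindex_bij_betw[symmetric])
    show "bij_betw Prod (Pow F) {d. d dvd n \<and> squarefree d}"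
    proof (rule bij_betwI[where g = prime_factors])
      show "Prod \<in> Pow F \<rightarrow> {d. d dvd n \<and> squarefree d}"
      proof
        fix P assume P: "P \<in> Pow F"
        have finP: "finite P" using P F_def finite_subset by auto
        have pr: "\<And>p. p \<in> P \<Longrightarrow> prime p" using P F_def by auto
        have "mset_set P \<subseteq># mset_set F"
          using P finP by (auto simp: F_def intro!: subset_imp_msubset_mset_set)
        also have "\<dots> \<subseteq># prime_factorization n" unfolding F_def by (rule mset_set_set_mset_msubset)
        finally have "prod_mset (mset_set P) dvd prod_mset (prime_factorization n)"
          by (rule prod_mset_subset_imp_dvd)
        then have "\<Prod>P dvd n" using n by (simp add: prod_unfold_prod_mset)
        moreover have "squarefree (\<Prod>P)"
          using squarefree_prod_coprime[of P id] pr
          by (auto simp: primes_coprime squarefree_prime)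
        ultimately show "\<Prod>P \<in> {d. d dvd n \<and> squarefree d}" by simp
      qed
      show "prime_factors \<in> {d. d dvd n \<and> squarefree d} \<rightarrow> Pow F"
        using n dvd_prime_factors[of n] by (auto simp: F_def)
      show "prime_factors (\<Prod>P) = P" if "P \<in> Pow F" for P
      proof -
        have finP: "finite P" using that F_def finite_subset by auto
        have pr: "\<And>p. p \<in> P \<Longrightarrow> prime p" using that F_def by auto
        show ?thesis using pf_prod[OF finP pr] finP by simp
      qed
      show "\<Prod>(prime_factors d) = d" if "d \<in> {d. d dvd n \<and> squarefree d}" for d
        using that sqf_prod by auto
    qed
  qed
  also have "\<dots> = (\<Sum>P \<in> Pow F. (-1) ^ card P)"
  proof (rule sum.cong[OF refl])
    fix P assume P: "P \<in> Pow F"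
    have finP: "finite P" using P F_def finite_subset by auto
    have pr: "\<And>p. p \<in> P \<Longrightarrow> prime p" using P F_def by auto
    have "squarefree (\<Prod>P)"
      using squarefree_prod_coprime[of P id] pr
      by (auto simp: primes_coprime squarefree_prime)
    moreover have "prime_factors (\<Prod>P) = P" using pf_prod[OF finP pr] finP by simp
    ultimately show "mu (\<Prod>P) = (-1) ^ card P" by (simp add: mu_def)
  qed
  also have "\<dots> = (\<Prod>x\<in>F. (1::real) - 1)"
    using prod_diff_conv_sum[of F "\<lambda>_. 1::real" "\<lambda>_. 1"] by (simp add: F_def)
  also have "\<dots> = (if n = 1 then 1 else 0)"
  proof (cases "n = 1")
    case False
    then have "F \<noteq> {}" using n unfolding F_def
      by (simp add: set_mset_eq_empty_iff prime_factorization_empty_iff)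
    then have "card F > 0" by (simp add: F_def card_gt_0_iff)
    then show ?thesis using False by simp
  qed (simp add: F_def)
  finally show ?thesis .
qed



lemma set_div: "1 \<le> (j::nat) \<Longrightarrow> {1..n div j} = {k. k \<in> {1..n} \<and> j*k \<le> n}"
proof (intro set_eqI iffI)
  fix k assume j: "1 \<le> j" and "k \<in> {1..n div j}"
  then have k1: "k \<ge> 1" and kj: "j * k \<le> n" using less_eq_div_iff_mult_less_eq[of j k n] by (auto simp: mult.commute)
  moreover have "k \<le> j * k" using j by simp
  ultimately have "k \<le> n" by linarith
  with k1 kj show "k \<in> {k. k \<in> {1..n} \<and> j*k \<le> n}" by (auto simp: mult.commute)
next
  fix k assume j: "1 \<le> j" and "k \<in> {k. k \<in> {1..n} \<and> j*k \<le> n}"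
  then show "k \<in> {1..n div j}" using less_eq_div_iff_mult_less_eq[of j k n] by (auto simp: mult.commute)
qed

lemma swap_div:
  fixes g :: "nat \<Rightarrow> nat \<Rightarrow> 'a::comm_monoid_add"
  shows "(\<Sum>j=1..n. \<Sum>k=1..n div j. g j k) = (\<Sum>k=1..n. \<Sum>j=1..n div k. g j k)"
proof -
  have "(\<Sum>j=1..n. \<Sum>k=1..n div j. g j k) = (\<Sum>j=1..n. \<Sum>k\<in>{k. k\<in>{1..n} \<and> j*k \<le> n}. g j k)"
  proof (rule sum.cong[OF refl])
    fix j assume "j \<in> {1..n}"
    then show "(\<Sum>k=1..n div j. g j k) = (\<Sum>k\<in>{k. k\<in>{1..n} \<and> j*k \<le> n}. g j k)"
      using set_div[of j n] by simp
  qed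
  also have "\<dots> = (\<Sum>k=1..n. \<Sum>j\<in>{j. j \<in> {1..n} \<and> j*k \<le> n}. g j k)"
    by (rule sum.swap_restrict) auto
  also have "\<dots> = (\<Sum>k=1..n. \<Sum>j=1..n div k. g j k)"
  proof (rule sum.cong[OF refl])
    fix k assume "k \<in> {1..n}"
    then have "{1..n div k} = {j. j \<in> {1..n} \<and> j*k \<le> n}" using set_div[of k n] by (auto simp: mult.commute)
    then show "(\<Sum>j\<in>{j. j \<in> {1..n} \<and> j*k \<le> n}. g j k) = (\<Sum>j=1..n div k. g j k)" by simp
  qed
  finally show ?thesis .
qed

lemma S_identity:
  "S_fun a n = (\<Sum>j=1..n. \<Sum>k=1..n div j. a k * of_real (ln (real k)))"
proof -
  have "(\<Sum>j=1..n. \<Sum>k=1..n div j. a k * of_real (ln (real k)))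
      = (\<Sum>k=1..n. \<Sum>j=1..n div k. a k * of_real (ln (real k)))" by (rule swap_div)
  also have "\<dots> = (\<Sum>k=1..n. a k * of_int \<lfloor>real n / real k\<rfloor> * of_real (ln (real k)))"
    by (rule sum.cong[OF refl]) (simp add: floor_divide_of_nat_eq)
  finally show ?thesis by (simp add: S_fun_def)
qed

lemma inversion:
  fixes F :: "nat \<Rightarrow> complex"
  assumes n: "n \<ge> 1"
  shows "F n = (\<Sum>j=1..n. of_real (mu j) * (\<Sum>i=1..n div j. F (n div j div i)))"
proof -
  have "(\<Sum>j=1..n. of_real (mu j) * (\<Sum>i=1..n div j. F (n div j div i)))
      = (\<Sum>j=1..n. \<Sum>i=1..n div j. of_real (mu j) * F (n div (j*i)))"
    by (rule sum.cong[OF refl]) (simp add: sum_distrib_left div_mult2_eq)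
  also have "\<dots> = (\<Sum>j=1..n. \<Sum>m\<in>{m. m \<in> {1..n} \<and> j dvd m}. of_real (mu j) * F (n div m))"
  proof (rule sum.cong[OF refl])
    fix j assume j: "j \<in> {1..n}"
    have E: "{1..n div j} = {k. k \<in> {1..n} \<and> j*k \<le> n}" using j by (intro set_div) auto
    have inj: "inj_on (\<lambda>i. j*i) {1..n div j}" using j by (simp add: inj_on_def)
    have img: "(\<lambda>i. j*i) ` {1..n div j} = {m. m \<in> {1..n} \<and> j dvd m}"
    proof (intro set_eqI iffI)
      fix m assume "m \<in> (\<lambda>i. j*i) ` {1..n div j}"
      then obtain i where i: "i \<in> {1..n div j}" "m = j*i" by auto
      have "i \<in> {k. k \<in> {1..n} \<and> j*k \<le> n}" using i(1) E by blast
      then have ji: "j*i \<le> n" "1 \<le> i" by auto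
      moreover have "1 \<le> j*i" using j ji(2) by simp
      ultimately show "m \<in> {m. m \<in> {1..n} \<and> j dvd m}" by (simp add: i(2))
    next
      fix m assume m: "m \<in> {m. m \<in> {1..n} \<and> j dvd m}"
      then obtain i where i: "m = j*i" by auto
      have m1: "1 \<le> m" "m \<le> n" using m by auto
      have i0: "i \<noteq> 0" using m1 i by (cases i) auto
      have "i \<le> j * i" using j by simp
      then have "i \<le> n" using m1 i by linarith
      then have "i \<in> {k. k \<in> {1..n} \<and> j*k \<le> n}" using i0 m1 i by auto
      then have "i \<in> {1..n div j}" using E by blast
      then show "m \<in> (\<lambda>i. j*i) ` {1..n div j}" using i by auto
    qed
    show "(\<Sum>i=1..n div j. of_real (mu j) * F (n div (j*i))) = (\<Sum>m\<in>{m. m \<in> {1..n} \<and> j dvd m}. of_real (mu j) * F (n div m))"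
      using sum.reindex[OF inj, of "\<lambda>m. of_real (mu j) * F (n div m)"] img by simp
  qed
  also have "\<dots> = (\<Sum>m=1..n. \<Sum>j\<in>{j. j \<in> {1..n} \<and> j dvd m}. of_real (mu j) * F (n div m))"
    by (rule sum.swap_restrict) auto
  also have "\<dots> = (\<Sum>m=1..n. (if m = 1 then F n else 0))"
  proof (rule sum.cong[OF refl])
    fix m assume m: "m \<in> {1..n}"
    then have "{j. j \<in> {1..n} \<and> j dvd m} = {j. j dvd m}" by (auto dest: dvd_imp_le)
    then have "(\<Sum>j\<in>{j. j \<in> {1..n} \<and> j dvd m}. of_real (mu j) * F (n div m))
        = of_real (\<Sum>j | j dvd m. mu j) * F (n div m)" by (simp add: sum_distrib_right)
    also have "\<dots> = (if m = 1 then F n else 0)" using m mu_sum[of m] by simp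
    finally show "(\<Sum>j\<in>{j. j \<in> {1..n} \<and> j dvd m}. of_real (mu j) * F (n div m)) = (if m = 1 then F n else 0)" .
  qed
  also have "\<dots> = F n" using n by (simp add: sum.delta)
  finally show ?thesis by simp
qed


lemma g_deriv:
  fixes s x :: real
  assumes x: "x > 1"
  shows "((\<lambda>x. inverse (ln x) * x powr (-s)) has_real_derivative
     (- (inverse x / (ln x)^2) * x powr (-s) + inverse (ln x) * (-s * x powr (-s - 1)))) (at x)"
proof -
  have l: "ln x > 0" using x by simp
  have "((\<lambda>x. inverse (ln x)) has_real_derivative (- (inverse x / (ln x)^2))) (at x)"
    using DERIV_inverse_fun[OF DERIV_ln[of x]] x l
    by (simp add: field_simps power2_eq_square)
  moreover have "((\<lambda>x. x powr (-s)) has_real_derivative (-s * x powr (-s - 1))) (at x)"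
    using has_real_derivative_powr[of x "-s"] x by simp
  ultimately have "((\<lambda>x. inverse (ln x) * x powr (-s)) has_real_derivative
     (- (inverse x / (ln x)^2)) * x powr (-s) + (-s * x powr (-s - 1)) * inverse (ln x)) (at x)"
    by (rule DERIV_mult)
  then show ?thesis by (simp add: algebra_simps)
qed

lemma cdiff:
  fixes s x :: real
  assumes s: "s > 1" and x: "x \<ge> 2"
  shows "\<bar>inverse (ln x) * x powr (-s) - inverse (ln (x+1)) * (x+1) powr (-s)\<bar>
          \<le> (inverse (ln 2)^2 + s * inverse (ln 2)) * x powr (-s-1)"
proof -
  define g where "g = (\<lambda>x::real. inverse (ln x) * x powr (-s))"
  define g' where "g' = (\<lambda>x::real. - (inverse x / (ln x)^2) * x powr (-s) + inverse (ln x) * (-s * x powr (-s - 1)))"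
  have "\<exists>z. x < z \<and> z < x + 1 \<and> g (x+1) - g x = (x + 1 - x) * g' z"
  proof (rule MVT2)
    fix t assume "x \<le> t" "t \<le> x + 1"
    then show "(g has_real_derivative g' t) (at t)" unfolding g_def g'_def using x by (intro g_deriv) auto
  qed simp
  then obtain z where z: "x < z" "z < x+1" "g (x+1) - g x = g' z" by auto
  have z0: "z > 0" "z \<ge> 2" using z x by auto
  have lz: "ln z \<ge> ln 2" using z0 by simp
  have l2: "ln 2 > (0::real)" by simp
  have il: "inverse (ln z) \<le> inverse (ln 2)" "inverse (ln z) \<ge> 0" using lz l2 z0 by (auto intro: le_imp_inverse_le)
  have e: "inverse z * z powr (-s) = z powr (-s-1)"
    using z0 by (simp add: powr_diff powr_minus divide_inverse mult.commute)
  have "\<bar>g' z\<bar> \<le> inverse z / (ln z)^2 * z powr (-s) + inverse (ln z) * (s * z powr (-s - 1))"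
  proof -
    have A0: "inverse z / (ln z)^2 * z powr (-s) \<ge> 0" using z0 by simp
    have B0: "inverse (ln z) * (s * z powr (-s - 1)) \<ge> 0" using il s by simp
    have "g' z = - (inverse z / (ln z)^2 * z powr (-s) + inverse (ln z) * (s * z powr (-s - 1)))"
      by (simp add: g'_def)
    then show ?thesis using A0 B0 by simp
  qed
  also have "\<dots> = z powr (-s-1) * (inverse (ln z)^2 + s * inverse (ln z))"
    using z0 lz l2 unfolding e[symmetric] by (simp add: field_simps power2_eq_square)
  also have "\<dots> \<le> x powr (-s-1) * (inverse (ln 2)^2 + s * inverse (ln 2))"
  proof (rule mult_mono)
    show "z powr (-s-1) \<le> x powr (-s-1)" using z x s by (intro powr_mono2') auto
    show "inverse (ln z)^2 + s * inverse (ln z) \<le> inverse (ln 2)^2 + s * inverse (ln 2)"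
      using il s by (intro add_mono power_mono mult_left_mono) auto
  qed (use il s in auto)
  finally show ?thesis using z(3) unfolding g_def by (simp add: abs_minus_commute mult.commute)
qed

lemma abel_summable:
  fixes b :: "nat \<Rightarrow> complex" and c :: "nat \<Rightarrow> real"
  assumes lim: "(\<lambda>N. of_real (c N) * (\<Sum>i\<le>N. b i)) \<longlonglongrightarrow> 0"
    and sm: "summable (\<lambda>n. norm (\<Sum>i\<le>n. b i) * \<bar>c n - c (Suc n)\<bar>)"
  shows "summable (\<lambda>n. b n * of_real (c n))"
proof -
  define BB where "BB N = (\<Sum>i\<le>N. b i)" for N
  define d where "d n = c n - c (Suc n)" for n
  define w where "w n = BB n * of_real (d n)" for n
  have id: "(\<Sum>n\<le>N. b n * of_real (c n)) = of_real (c N) * BB N + (\<Sum>n<N. w n)" for N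
  proof (induction N)
    case 0 then show ?case by (simp add: BB_def)
  next
    case (Suc N)
    have "(\<Sum>n\<le>Suc N. b n * of_real (c n)) = of_real (c N) * BB N + (\<Sum>n<N. w n) + b (Suc N) * of_real (c (Suc N))"
      using Suc by simp
    also have "\<dots> = of_real (c (Suc N)) * BB (Suc N) + (\<Sum>n<Suc N. w n)"
      by (simp add: BB_def w_def d_def algebra_simps)
    finally show ?case .
  qed
  have eq: "(\<lambda>n. norm (w n)) = (\<lambda>n. norm (\<Sum>i\<le>n. b i) * \<bar>c n - c (Suc n)\<bar>)"
    unfolding w_def norm_mult norm_of_real d_def BB_def by (rule refl)
  have nw: "summable (\<lambda>n. norm (w n))" unfolding eq by (rule sm)
  then have ws: "summable w" by (rule summable_norm_cancel)
  have "(\<lambda>N. of_real (c N) * BB N + (\<Sum>n<N. w n)) \<longlonglongrightarrow> 0 + suminf w"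
    by (intro tendsto_add) (use lim summable_LIMSEQ[OF ws] in \<open>simp_all add: BB_def\<close>)
  then have "(\<lambda>N. (\<Sum>n<Suc N. b n * of_real (c n))) \<longlonglongrightarrow> suminf w"
    using id by (simp add: lessThan_Suc_atMost)
  then have "(\<lambda>N. (\<Sum>n<N. b n * of_real (c n))) \<longlonglongrightarrow> suminf w"
    by (rule LIMSEQ_imp_Suc)
  then show ?thesis unfolding summable_def sums_def by blast
qed


theorem lemma2:
  fixes a :: "nat \<Rightarrow> complex"
  assumes H: "\<And>v. v > 1 \<Longrightarrow> (\<lambda>k. norm (S_fun a k) / real k powr v) \<longlonglongrightarrow> 0"
  shows "\<And>v. v > 1 \<Longrightarrow> summable (\<lambda>m. a (Suc m) / of_real (real (Suc m) powr v))"
proof -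
  fix s :: real assume s: "s > 1"
  define v where "v = (1 + s) / 2"
  have v: "1 < v" "v < s" using s by (auto simp: v_def)
  define b where "b k = a k * of_real (ln (real k))" for k
  define B where "B m = (\<Sum>k=1..m. b k)" for m
  have SB: "S_fun a n = (\<Sum>j=1..n. B (n div j))" for n
    using S_identity[of a n] by (simp add: B_def b_def)
  have Binv: "B n = (\<Sum>j=1..n. of_real (mu j) * S_fun a (n div j))" if "n \<ge> 1" for n
    using inversion[OF that, of B] by (simp add: SB)
  have "convergent (\<lambda>k. norm (S_fun a k) / real k powr v)"
    using H[OF v(1)] by (rule convergentI)
  then have "Bseq (\<lambda>k. norm (S_fun a k) / real k powr v)" by (rule convergent_imp_Bseq)
  then obtain C where C: "C > 0" "\<And>k. norm (norm (S_fun a k) / real k powr v) \<le> C"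
    by (rule BseqE) blast
  have Sb: "norm (S_fun a k) \<le> C * real k powr v" for k
  proof (cases "k = 0")
    case True then show ?thesis by (simp add: S_fun_def)
  next
    case False then have p: "real k powr v > 0" by simp
    from C(2)[of k] have "norm (S_fun a k) / real k powr v \<le> C" by simp
    then show ?thesis using p by (simp add: pos_divide_le_eq)
  qed
  define Z where "Z = (\<Sum>j. real (Suc j) powr (-v))"
  have "summable (\<lambda>j. real j powr (-v))" using v by (simp add: summable_real_powr_iff)
  then have sumZ: "summable (\<lambda>j. real (Suc j) powr (-v))"
    using summable_Suc_iff[of "\<lambda>j. real j powr (-v)"] by simp
  have Z0: "Z \<ge> 0" unfolding Z_def by (rule suminf_nonneg[OF sumZ]) simp
  have Zb: "(\<Sum>j=1..n. real j powr (-v)) \<le> Z" for n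
  proof -
    have "(\<Sum>j=1..n. real j powr (-v)) = (\<Sum>j<n. real (Suc j) powr (-v))"
      by (rule sum_bounds_lt_plus1[symmetric])
    also have "\<dots> \<le> Z" unfolding Z_def by (rule sum_le_suminf[OF sumZ]) auto
    finally show ?thesis .
  qed
  have Bb: "norm (B n) \<le> C * Z * real n powr v" for n
  proof (cases "n = 0")
    case True then show ?thesis using C Z0 by (simp add: B_def)
  next
    case False
    then have n1: "n \<ge> 1" by simp
    have "norm (B n) \<le> (\<Sum>j=1..n. norm (of_real (mu j) * S_fun a (n div j)))"
      unfolding Binv[OF n1] by (rule norm_sum)
    also have "\<dots> \<le> (\<Sum>j=1..n. C * (real n powr v * real j powr (-v)))"
    proof (rule sum_mono)
      fix j assume j: "j \<in> {1..n}"
      have "norm (of_real (mu j) * S_fun a (n div j)) = \<bar>mu j\<bar> * norm (S_fun a (n div j))"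
        by (simp add: norm_mult)
      also have "\<dots> \<le> 1 * norm (S_fun a (n div j))"
        by (rule mult_right_mono) (simp_all add: mu_abs)
      also have "\<dots> \<le> C * real (n div j) powr v" using Sb by simp
      also have "\<dots> \<le> C * (real n / real j) powr v"
        using C v by (intro mult_left_mono powr_mono2) (auto simp: of_nat_div_le_of_nat)
      also have "\<dots> = C * (real n powr v * real j powr (-v))"
        using j by (simp add: powr_divide powr_minus_divide)
      finally show "norm (of_real (mu j) * S_fun a (n div j)) \<le> C * (real n powr v * real j powr (-v))" .
    qed
    also have "\<dots> = C * real n powr v * (\<Sum>j=1..n. real j powr (-v))"
      by (simp add: sum_distrib_left mult.assoc)
    also have "\<dots> \<le> C * real n powr v * Z"
      using C Zb by (intro mult_left_mono) auto
    finally show ?thesis by (simp add: mult_ac)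
  qed
  define b' where "b' n = b (n + 2)" for n
  define c where "c n = inverse (ln (real n + 2)) * (real n + 2) powr (-s)" for n
  have BB: "(\<Sum>i\<le>N. b' i) = B (N + 2)" for N
  proof -
    have "B (N + 2) = b 1 + (\<Sum>k=2..N+2. b k)"
      unfolding B_def by (subst sum.atLeast_Suc_atMost) (auto simp: numeral_2_eq_2)
    also have "b 1 = 0" by (simp add: b_def)
    also have "(\<Sum>k=2..N+2. b k) = (\<Sum>i=0..N. b (i + 2))"
      using sum.shift_bounds_cl_nat_ivl[of b 0 2 N] by (simp only: add_0)
    finally show ?thesis by (simp add: b'_def atMost_atLeast0)
  qed
  have Bb': "norm (\<Sum>i\<le>N. b' i) \<le> C * Z * (real N + 2) powr v" for N
    using Bb[of "N+2"] unfolding BB by (simp add: add.commute)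
  define M where "M = inverse (ln 2)^2 + s * inverse (ln (2::real))"
  have l2: "ln (2::real) > 0" by simp
  have cpos: "c n \<ge> 0" for n
    unfolding c_def by (intro mult_nonneg_nonneg) auto
  have cb: "c n \<le> inverse (ln 2) * (real n + 2) powr (-s)" for n
    unfolding c_def by (intro mult_right_mono le_imp_inverse_le) auto
  have lim: "(\<lambda>N. of_real (c N) * (\<Sum>i\<le>N. b' i)) \<longlonglongrightarrow> 0"
  proof (rule Lim_null_comparison)
    show "\<forall>\<^sub>F N in sequentially. norm (of_real (c N) * (\<Sum>i\<le>N. b' i)) \<le> C * Z * inverse (ln 2) * (real N + 2) powr (v - s)"
    proof (rule always_eventually, rule allI)
      fix N
      have "norm (of_real (c N) * (\<Sum>i\<le>N. b' i)) = c N * norm (\<Sum>i\<le>N. b' i)"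
        using cpos[of N] by (simp add: norm_mult)
      also have "\<dots> \<le> (inverse (ln 2) * (real N + 2) powr (-s)) * (C * Z * (real N + 2) powr v)"
        using cb[of N] Bb'[of N] cpos[of N] by (intro mult_mono) auto
      also have "\<dots> = C * Z * inverse (ln 2) * ((real N + 2) powr v * (real N + 2) powr (-s))"
        by (simp add: mult_ac)
      also have "(real N + 2) powr v * (real N + 2) powr (-s) = (real N + 2) powr (v - s)"
        by (simp add: powr_add[symmetric])
      finally show "norm (of_real (c N) * (\<Sum>i\<le>N. b' i)) \<le> C * Z * inverse (ln 2) * (real N + 2) powr (v - s)" .
    qed
    have "filterlim (\<lambda>N. 2 + real N) at_top sequentially"
      by (rule filterlim_tendsto_add_at_top[OF tendsto_const filterlim_real_sequentially])
    then have "filterlim (\<lambda>N. real N + 2) at_top sequentially" by (simp add: add.commute)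
    then have "(\<lambda>N. (real N + 2) powr (v - s)) \<longlonglongrightarrow> 0"
      using v by (intro tendsto_neg_powr) auto
    then show "(\<lambda>N. C * Z * inverse (ln 2) * (real N + 2) powr (v - s)) \<longlonglongrightarrow> 0"
      by (rule tendsto_mult_right_zero)
  qed
  have sm: "summable (\<lambda>n. norm (\<Sum>i\<le>n. b' i) * \<bar>c n - c (Suc n)\<bar>)"
  proof (rule summable_comparison_test')
    have "summable (\<lambda>n. real n powr (v - s - 1))" using v by (simp add: summable_real_powr_iff)
    then have "summable (\<lambda>n. real (n + 2) powr (v - s - 1))"
      using summable_iff_shift[of "\<lambda>n. real n powr (v - s - 1)" 2] by simp
    then show "summable (\<lambda>n. C * Z * M * (real n + 2) powr (v - s - 1))"
      by (intro summable_mult) (simp add: add.commute)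
    fix n :: nat
    have cd: "\<bar>c n - c (Suc n)\<bar> \<le> M * (real n + 2) powr (-s-1)"
    proof -
      have "c (Suc n) = inverse (ln (real n + 2 + 1)) * (real n + 2 + 1) powr (-s)"
        by (simp add: c_def add_ac)
      then have "\<bar>c n - c (Suc n)\<bar> = \<bar>inverse (ln (real n + 2)) * (real n + 2) powr (-s)
           - inverse (ln (real n + 2 + 1)) * (real n + 2 + 1) powr (-s)\<bar>"
        by (simp add: c_def)
      also have "\<dots> \<le> M * (real n + 2) powr (-s-1)"
        unfolding M_def using s by (intro cdiff) auto
      finally show ?thesis .
    qed
    have "norm (norm (\<Sum>i\<le>n. b' i) * \<bar>c n - c (Suc n)\<bar>) = norm (\<Sum>i\<le>n. b' i) * \<bar>c n - c (Suc n)\<bar>"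
      by simp
    also have "\<dots> \<le> (C * Z * (real n + 2) powr v) * (M * (real n + 2) powr (-s-1))"
      using Bb'[of n] cd C Z0 by (intro mult_mono) auto
    also have "\<dots> = C * Z * M * ((real n + 2) powr v * (real n + 2) powr (-s-1))"
      by (simp add: mult_ac)
    also have "(real n + 2) powr v * (real n + 2) powr (-s-1) = (real n + 2) powr (v - s - 1)"
      by (simp add: powr_add[symmetric] algebra_simps)
    finally show "norm (norm (\<Sum>i\<le>n. b' i) * \<bar>c n - c (Suc n)\<bar>) \<le> C * Z * M * (real n + 2) powr (v - s - 1)" .
  qed
  have "summable (\<lambda>n. b' n * of_real (c n))"
    by (rule abel_summable[OF lim sm])
  moreover have "b' n * of_real (c n) = a (Suc (Suc n)) / of_real (real (Suc (Suc n)) powr s)" for n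
  proof -
    have ln0: "ln (real n + 2) \<noteq> 0" by simp
    have r: "real (n+2) = real n + 2" by simp
    have "b' n * of_real (c n) = a (n+2) * (of_real (ln (real n + 2)) * of_real (c n))"
      by (simp only: b'_def b_def r mult.assoc)
    also have "of_real (ln (real n + 2)) * of_real (c n) = (of_real (ln (real n + 2) * c n) :: complex)"
      by (rule of_real_mult[symmetric])
    also have "ln (real n + 2) * c n = (real n + 2) powr (-s)" using ln0 by (simp add: c_def)
    also have "a (n+2) * of_real ((real n + 2) powr (-s)) = a (Suc (Suc n)) / of_real (real (Suc (Suc n)) powr s)"
      by (simp add: powr_minus divide_inverse add_ac)
    finally show ?thesis .
  qed
  ultimately have "summable (\<lambda>n. a (Suc (Suc n)) / of_real (real (Suc (Suc n)) powr s))" by simp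
  then show "summable (\<lambda>m. a (Suc m) / of_real (real (Suc m) powr s))"
    using summable_Suc_iff[of "\<lambda>m. a (Suc m) / of_real (real (Suc m) powr s)"] by simp
qed

end
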